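(* Let $z_1,z_2,z_3$ be three distinct complex numbers and let $w_1,w_2,w_3$ be three distinct complex numbers. Suppose that the 4-point sets $\{z_1,z_2,z_3,\infty\}$ and $\{w_1,w_2,w_3,\infty\}$ in the Riemann sphere $\widehat{\mathbb{C}}$ are Möbius equivalent, i.e. there is a Möbius transformation $\mu$ with $\mu(\{z_1,z_2,z_3,\infty\})=\{w_1,w_2,w_3,\infty\}$. Then there exists an affine transformation $T(z)=az+b$ with $a,b\in\mathbb{C}$, $a\neq 0$, such that $T(\{z_1,z_2,z_3\})=\{w_1,w_2,w_3\}$.
   Context: A Möbius transformation is a map $z\mapsto \frac{\alpha z+\beta}{\gamma z+\delta}$ of $\widehat{\mathbb{C}}=\mathbb{C}\cup\{\infty\}$ with $\alpha\delta-\beta\gamma\neq 0$. *)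

theory Defs
  imports Complex_Main
begin

text \<open>The Riemann sphere is modelled as complex option: Some z is the finite point z,
  None is the point at infinity.\<close>

type_synonym riemann_sphere = "complex option"

definition moebius_app ::
  "complex \<Rightarrow> complex \<Rightarrow> complex \<Rightarrow> complex \<Rightarrow> riemann_sphere \<Rightarrow> riemann_sphere" where
  "moebius_app \<alpha> \<beta> \<gamma> \<delta> p =
     (case p of
        None \<Rightarrow> (if \<gamma> = 0 then None else Some (\<alpha> / \<gamma>))
      | Some z \<Rightarrow> (if \<gamma> * z + \<delta> = 0 then None else Some ((\<alpha> * z + \<beta>) / (\<gamma> * z + \<delta>))))"

definition moebius_equivalent :: "riemann_sphere set \<Rightarrow> riemann_sphere set \<Rightarrow> bool" where
  "moebius_equivalent A B \<longleftrightarrow>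
     (\<exists>\<alpha> \<beta> \<gamma> \<delta>. \<alpha> * \<delta> - \<beta> * \<gamma> \<noteq> 0 \<and> moebius_app \<alpha> \<beta> \<gamma> \<delta> ` A = B)"

end

theory Submission
  imports Defs
begin


lemma l1: fixes g z d z0 :: complex assumes "g \<noteq> 0" "g*z+d=0" "z0 = -d/g" shows "z = z0"
proof -
  have "g*z0 = -d" using assms by simp
  moreover have "g*z = -d" using assms(2) by (simp add: eq_neg_iff_add_eq_0)
  ultimately have "g*z = g*z0" by simp
  then show ?thesis using assms(1) by simp
qed
lemma l4: fixes a b c g D z z0 w1 u :: complex assumes "D \<noteq> 0" "g \<noteq> 0" "z - z0 \<noteq> 0"
  "a = c*g*g/D" "b = w1 - a*z0" "u - w1 = D / (g*g*(z-z0))"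
  shows "a*z+b = w1 + c/(u-w1)"
proof -
  have "c/(u-w1) = c*(g*g*(z-z0))/D" using assms(6) by simp
  also have "\<dots> = a*(z-z0)" using assms(4) by simp
  finally have e: "c/(u-w1) = a*(z-z0)" .
  show ?thesis unfolding e using assms(5) by (simp add: algebra_simps)
qed
lemma l3: fixes al be g z d D :: complex assumes "g \<noteq> 0" "g*z+d \<noteq> 0" "D = be*g - al*d"
  shows "(al*z+be)/(g*z+d) - al/g = D / (g*g*((g*z+d)/g))"
proof -
  have "g*g*((g*z+d)/g) = g*(g*z+d)" using assms by simp
  moreover have "(al*z+be)/(g*z+d) - al/g = (g*(al*z+be) - al*(g*z+d))/(g*(g*z+d))"
    using assms by (simp add: diff_frac_eq mult.commute)
  moreover have "g*(al*z+be) - al*(g*z+d) = D" using assms by (simp add: algebra_simps)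
  ultimately show ?thesis by simp
qed

lemma core:
  fixes \<alpha> \<beta> \<gamma> \<delta> w1 w2 w3 :: complex and Z :: "complex set"
  assumes g: "\<gamma> \<noteq> 0" and det: "\<alpha> * \<delta> - \<beta> * \<gamma> \<noteq> 0" and w1: "\<alpha> / \<gamma> = w1"
    and img: "\<forall>z\<in>Z. \<gamma> * z + \<delta> \<noteq> 0 \<longrightarrow> (\<alpha> * z + \<beta>) / (\<gamma> * z + \<delta>) \<in> {w1, w2, w3}"
    and d: "distinct [w1, w2, w3]"
  shows "\<exists>a b. a \<noteq> 0 \<and> (\<forall>z\<in>Z. a * z + b \<in> {w1, w2, w3})"
proof -
  define D where "D = \<beta> * \<gamma> - \<alpha> * \<delta>"
  have D0: "D \<noteq> 0" using det unfolding D_def by (metis right_minus_eq mult.commute)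
  define c where "c = (w2 - w1) * (w3 - w1)"
  have c0: "c \<noteq> 0" using d unfolding c_def by auto
  define z0 where "z0 = - \<delta> / \<gamma>"
  define a where "a = c * \<gamma> * \<gamma> / D"
  define b where "b = w1 - a * z0"
  have a0: "a \<noteq> 0" using c0 g D0 unfolding a_def by auto
  have "\<forall>z\<in>Z. a * z + b \<in> {w1, w2, w3}"
  proof
    fix z assume z: "z \<in> Z"
    show "a * z + b \<in> {w1, w2, w3}"
    proof (cases "\<gamma> * z + \<delta> = 0")
      case True
      have "z = z0" by (rule l1[OF g True z0_def])
      then show ?thesis unfolding b_def by simp
    next
      case False
      define u where "u = (\<alpha> * z + \<beta>) / (\<gamma> * z + \<delta>)"
      have uW: "u \<in> {w1, w2, w3}" using img z False unfolding u_def by auto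
      have zz: "z - z0 = (\<gamma> * z + \<delta>) / \<gamma>" using g unfolding z0_def by (simp add: diff_divide_distrib[symmetric] add_divide_distrib)
      have zz0: "z - z0 \<noteq> 0" using zz False g by simp
      have uw: "u - w1 = D / (\<gamma> * \<gamma> * (z - z0))"
        unfolding u_def zz w1[symmetric] using l3[OF g False D_def] .
      have uw0: "u - w1 \<noteq> 0" using uw D0 g zz0 by simp
      have ab: "a * z + b = w1 + c / (u - w1)"
        using l4[OF D0 g zz0 a_def b_def uw] .
      from uW uw0 have "u = w2 \<or> u = w3" by auto
      then show ?thesis
      proof
        assume "u = w2" then show ?thesis unfolding ab c_def using d by simp
      next
        assume "u = w3" then show ?thesis unfolding ab c_def using d by simp
      qed
    qed
  qed
  then show ?thesis using a0 by blast
qed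

theorem lemma1p2:
  fixes z1 z2 z3 w1 w2 w3 :: complex
  assumes "distinct [z1, z2, z3]"
    and "distinct [w1, w2, w3]"
    and "moebius_equivalent {Some z1, Some z2, Some z3, None} {Some w1, Some w2, Some w3, None}"
  shows "\<exists>a b :: complex. a \<noteq> 0 \<and> (\<lambda>z. a * z + b) ` {z1, z2, z3} = {w1, w2, w3}"
proof -
  obtain \<alpha> \<beta> \<gamma> \<delta> where det: "\<alpha> * \<delta> - \<beta> * \<gamma> \<noteq> 0"
    and im: "moebius_app \<alpha> \<beta> \<gamma> \<delta> ` {Some z1, Some z2, Some z3, None} = {Some w1, Some w2, Some w3, None}"
    using assms(3) unfolding moebius_equivalent_def by blast
  let ?Z = "{z1, z2, z3}" and ?W = "{w1, w2, w3}"
  have img: "\<forall>z\<in>?Z. \<gamma> * z + \<delta> \<noteq> 0 \<longrightarrow> (\<alpha> * z + \<beta>) / (\<gamma> * z + \<delta>) \<in> ?W"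
  proof (intro ballI impI)
    fix z assume z: "z \<in> ?Z" and nz: "\<gamma> * z + \<delta> \<noteq> 0"
    have "moebius_app \<alpha> \<beta> \<gamma> \<delta> (Some z) \<in> {Some w1, Some w2, Some w3, None}"
      unfolding im[symmetric] using z by (intro imageI) auto
    then show "(\<alpha> * z + \<beta>) / (\<gamma> * z + \<delta>) \<in> ?W" using nz by (auto simp: moebius_app_def)
  qed
  have ex: "\<exists>a b. a \<noteq> 0 \<and> (\<forall>z\<in>?Z. a * z + b \<in> ?W)"
  proof (cases "\<gamma> = 0")
    case True
    then have d0: "\<delta> \<noteq> 0" and a0: "\<alpha> \<noteq> 0" using det by auto
    have "\<forall>z\<in>?Z. \<alpha> / \<delta> * z + \<beta> / \<delta> \<in> ?W"
    proof
      fix z assume "z \<in> ?Z"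
      then have "(\<alpha> * z + \<beta>) / (\<gamma> * z + \<delta>) \<in> ?W" using img True d0 by auto
      then show "\<alpha> / \<delta> * z + \<beta> / \<delta> \<in> ?W" using True d0 by (simp add: add_divide_distrib)
    qed
    then show ?thesis using a0 d0 by (metis divide_eq_0_iff)
  next
    case False
    have "moebius_app \<alpha> \<beta> \<gamma> \<delta> None \<in> {Some w1, Some w2, Some w3, None}"
      unfolding im[symmetric] by (intro imageI) simp
    then have wi: "\<alpha> / \<gamma> \<in> ?W" using False by (auto simp: moebius_app_def)
    have sw1: "{w2, w1, w3} = ?W" and sw2: "{w3, w1, w2} = ?W" by auto
    from wi consider "\<alpha> / \<gamma> = w1" | "\<alpha> / \<gamma> = w2" | "\<alpha> / \<gamma> = w3" by auto
    then show ?thesis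
    proof cases
      case 1 show ?thesis by (rule core[OF False det 1 img assms(2)])
    next
      case 2
      have d2: "distinct [w2, w1, w3]" using assms(2) by auto
      have img2: "\<forall>z\<in>?Z. \<gamma> * z + \<delta> \<noteq> 0 \<longrightarrow> (\<alpha> * z + \<beta>) / (\<gamma> * z + \<delta>) \<in> {w2, w1, w3}"
        using img unfolding sw1 .
      show ?thesis using core[OF False det 2 img2 d2] unfolding sw1 .
    next
      case 3
      have d3: "distinct [w3, w1, w2]" using assms(2) by auto
      have img3: "\<forall>z\<in>?Z. \<gamma> * z + \<delta> \<noteq> 0 \<longrightarrow> (\<alpha> * z + \<beta>) / (\<gamma> * z + \<delta>) \<in> {w3, w1, w2}"
        using img unfolding sw2 .
      show ?thesis using core[OF False det 3 img3 d3] unfolding sw2 .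
    qed
  qed
  then obtain a b where a0: "a \<noteq> 0" and ab: "\<forall>z\<in>?Z. a * z + b \<in> ?W" by blast
  have inj: "inj (\<lambda>z. a * z + b)" using a0 by (auto simp: inj_def)
  have sub: "(\<lambda>z. a * z + b) ` ?Z \<subseteq> ?W" using ab by blast
  have "card ((\<lambda>z. a * z + b) ` ?Z) = card ?Z" using inj by (meson card_image inj_on_subset subset_UNIV)
  also have "\<dots> = 3" using assms(1) by simp
  also have "\<dots> = card ?W" using assms(2) by simp
  finally have "(\<lambda>z. a * z + b) ` ?Z = ?W" using sub by (intro card_subset_eq) auto
  then show ?thesis using a0 by blast
qed

end
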